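(* Let $a, b, n$ be positive integers with $b>1$, $n>1$ and $\gcd(r_b(n),a)=1$. Then the genus of $S_a(b,n)$ is \[\operatorname{g}(S_a(b,n)) = \frac{(n-1)\, b^n + (r_b(n) - 1)\, a}{2} = \frac{(n-1)\,b^n + a\sum_{j=1}^{n-1} b^j}{2}.\]
   Context: For $\ell \ge 1$, $r_b(\ell) = \sum_{j=0}^{\ell-1} b^j$, and $r_b(0)=0$. For $i \ge 1$, $a_i := r_b(n) + a\, r_b(i-1)$; $S_a(b,n)$ is the numerical semigroup generated by $\{a_i : i\ge 1\}$. The genus $\operatorname{g}(S)$ of a numerical semigroup $S$ is the cardinality of $\mathbb{N}\setminus S$. *)

theory Defs
  imports Main
begin

definition rb :: "nat \<Rightarrow> nat \<Rightarrow> nat" where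
  "rb b l = (\<Sum>j<l. b ^ j)"

inductive_set gen_monoid :: "nat set \<Rightarrow> nat set" for A :: "nat set" where
  zero: "0 \<in> gen_monoid A"
| gen: "x \<in> A \<Longrightarrow> x \<in> gen_monoid A"
| add: "x \<in> gen_monoid A \<Longrightarrow> y \<in> gen_monoid A \<Longrightarrow> x + y \<in> gen_monoid A"

definition gen_a :: "nat \<Rightarrow> nat \<Rightarrow> nat \<Rightarrow> nat \<Rightarrow> nat" where
  "gen_a a b n i = rb b n + a * rb b (i - 1)"

definition S_a :: "nat \<Rightarrow> nat \<Rightarrow> nat \<Rightarrow> nat set" where
  "S_a a b n = gen_monoid {gen_a a b n i | i. i \<ge> 1}"

definition genus :: "nat set \<Rightarrow> nat" where
  "genus S = card (UNIV - S)"

end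

theory Submission
  imports Defs
begin

lemma rb_0[simp]: "rb b 0 = 0" by (simp add: rb_def)
lemma rb_Suc: "rb b (Suc k) = rb b k + b ^ k" by (simp add: rb_def)
lemma rb_Suc': "rb b (Suc k) = b * rb b k + 1"
  unfolding rb_def by (subst sum.lessThan_Suc_shift) (simp add: sum_distrib_left)
lemma rb_add: "rb b (n + i) = rb b n + b ^ n * rb b i"
  by (induction i) (auto simp: rb_Suc algebra_simps power_add)
lemma rb_pow: "b \<ge> 1 \<Longrightarrow> (b - 1) * rb b n + 1 = b ^ n"
proof -
  assume "b \<ge> 1"
  then obtain c where c: "b = Suc c" by (cases b) auto
  show ?thesis unfolding c by (induction n) (simp_all add: rb_Suc algebra_simps)
qed
lemma rb_pos: "rb b (Suc k) \<ge> 1" by (simp add: rb_Suc')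
lemma rb_mono: "j \<le> k \<Longrightarrow> rb b j \<le> rb b k"
  unfolding rb_def by (rule sum_mono2) auto
lemma rb_strict: "b \<ge> 1 \<Longrightarrow> j < k \<Longrightarrow> rb b j < rb b k"
proof -
  assume b: "b \<ge> 1" and "j < k"
  then have "rb b j < rb b (Suc j)" by (simp add: rb_Suc)
  also have "\<dots> \<le> rb b k" using \<open>j<k\<close> by (intro rb_mono) simp
  finally show ?thesis .
qed

fun gr :: "nat \<Rightarrow> nat \<Rightarrow> nat \<Rightarrow> nat" where
  "gr b 0 u = 0"
| "gr b (Suc k) u = u div rb b (Suc k) + gr b k (u mod rb b (Suc k))"

lemma gr_zero[simp]: "gr b k 0 = 0" by (induction k) auto

lemma gr_decomp: "v < rb b (Suc k) \<Longrightarrow> gr b (Suc k) (q * rb b (Suc k) + v) = q + gr b k v"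
proof -
  assume "v < rb b (Suc k)"
  moreover have "rb b (Suc k) > 0" using rb_pos[of b k] by simp
  ultimately show ?thesis by simp
qed

lemma gr_low: "x < rb b (Suc j) \<Longrightarrow> j \<le> k \<Longrightarrow> gr b k x = gr b j x"
proof (induction k)
  case (Suc k)
  show ?case
  proof (cases "j = Suc k")
    case False
    then have "j \<le> k" using Suc by simp
    have "rb b (Suc j) \<le> rb b (Suc k)" using \<open>j \<le> k\<close> by (intro rb_mono) simp
    then have "x < rb b (Suc k)" using Suc by simp
    then show ?thesis using Suc \<open>j \<le> k\<close> by simp
  qed simp
qed simp

lemma gr_E: "b \<ge> 1 \<Longrightarrow> 1 \<le> j \<Longrightarrow> j \<le> Suc k \<Longrightarrow> gr b k (rb b j - 1) \<le> b"
proof -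
  assume b: "b \<ge> 1" and j: "1 \<le> j" "j \<le> Suc k"
  obtain j' where j': "j = Suc j'" using j by (cases j) auto
  have "rb b j - 1 < rb b (Suc j')" using rb_pos[of b j'] j' by simp
  then have e: "gr b k (rb b j - 1) = gr b j' (rb b j - 1)" using j j' by (intro gr_low) auto
  show ?thesis
  proof (cases j')
    case 0 then show ?thesis using e by simp
  next
    case (Suc j'')
    have "rb b j - 1 = b * rb b (Suc j'') + 0" using j' Suc by (simp add: rb_Suc')
    then have "gr b j' (rb b j - 1) = b + gr b j'' 0" using Suc gr_decomp[of 0 b j'' b] rb_pos[of b j'']
      by (simp add: mult.commute)
    then show ?thesis using e by simp
  qed
qed

lemma gr_D: "b \<ge> 1 \<Longrightarrow> 1 \<le> v \<Longrightarrow> v < rb b (Suc k) \<Longrightarrow> gr b k (v - 1) + 1 \<le> gr b k v + b"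
proof (induction k arbitrary: v)
  case 0 then show ?case by (simp add: rb_def)
next
  case (Suc k)
  define P where "P = rb b (Suc k)"
  have P1: "P \<ge> 1" unfolding P_def by (rule rb_pos)
  define q where "q = v div P"
  define w where "w = v mod P"
  have v: "v = q * P + w" unfolding q_def w_def by simp
  have wP: "w < P" unfolding w_def using P1 by simp
  have gv: "gr b (Suc k) v = q + gr b k w" unfolding v P_def using wP P_def gr_decomp by simp
  show ?case
  proof (cases "w \<ge> 1")
    case True
    have "v - 1 = q * P + (w - 1)" using v True by simp
    then have "gr b (Suc k) (v - 1) = q + gr b k (w - 1)" using wP P_def gr_decomp by simp
    moreover have "gr b k (w - 1) + 1 \<le> gr b k w + b" using Suc.IH[of w] Suc.prems True wP P_def by simp
    ultimately show ?thesis using gv by simp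
  next
    case False
    then have w0: "w = 0" by simp
    then have q1: "q \<ge> 1" using v Suc.prems by (cases q) auto
    obtain q' where q': "q = Suc q'" using q1 by (cases q) auto
    have "v - 1 = (q - 1) * P + (P - 1)" using v w0 q' P1 by simp
    then have "gr b (Suc k) (v - 1) = (q - 1) + gr b k (P - 1)" using P1 P_def gr_decomp[of "P - 1" b k "q - 1"] by simp
    moreover have "gr b k (P - 1) \<le> b" unfolding P_def using Suc.prems by (intro gr_E) auto
    ultimately show ?thesis using gv w0 q1 by simp
  qed
qed

lemma gr_dec: "P = rb b (Suc k) \<Longrightarrow> v < P \<Longrightarrow> gr b (Suc k) (q*P + v) = q + gr b k v"
  using gr_decomp by simp
lemma gr_dec0: "P = rb b (Suc k) \<Longrightarrow> v < P \<Longrightarrow> gr b (Suc k) v = gr b k v"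
  using gr_decomp[of v b k 0] by simp

declare gr.simps(2)[simp del]

lemma H1: "(q::nat)*P + v < b*P + 1 \<Longrightarrow> P \<ge> 1 \<Longrightarrow> q \<le> b \<and> (q = b \<longrightarrow> v = 0)"
proof -
  assume a: "q*P + v < b*P + 1" and P: "P \<ge> 1"
  have "q \<le> b"
  proof (rule ccontr)
    assume "\<not> q \<le> b"
    then have "Suc b * P \<le> q * P" by (intro mult_le_mono1) simp
    then show False using a P by simp
  qed
  then show ?thesis using a by auto
qed

lemma H2: "(w::nat) < P \<Longrightarrow> b*P + 1 \<le> c*P + w \<Longrightarrow> b \<le> c \<and> (c = b \<longrightarrow> w \<ge> 1)"
proof -
  assume w: "w < P" and a: "b*P + 1 \<le> c*P + w"
  have "b \<le> c"
  proof (rule ccontr)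
    assume "\<not> b \<le> c"
    then have "Suc c * P \<le> b * P" by (intro mult_le_mono1) simp
    then show False using a w by simp
  qed
  then show ?thesis using a by auto
qed

lemma gr_C: "b \<ge> 1 \<Longrightarrow> 1 \<le> i \<Longrightarrow> i \<le> k \<Longrightarrow> u < rb b (Suc k) \<Longrightarrow>
  (u + rb b i < rb b (Suc k) \<longrightarrow> gr b k (u + rb b i) \<le> gr b k u + 1) \<and>
  (rb b (Suc k) \<le> u + rb b i \<longrightarrow> gr b k (u + rb b i - rb b (Suc k)) \<le> gr b k u)"
proof (induction k arbitrary: u i)
  case 0 then show ?case by simp
next
  case (Suc k)
  define P where "P = rb b (Suc k)"
  define R where "R = rb b (Suc (Suc k))"
  have RP: "R = b * P + 1" unfolding R_def P_def by (rule rb_Suc')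
  have P1: "P \<ge> 1" unfolding P_def by (rule rb_pos)
  define q where "q = u div P"
  define v where "v = u mod P"
  have u: "u = q * P + v" unfolding q_def v_def by simp
  have vP: "v < P" unfolding v_def using P1 by simp
  have gu: "gr b (Suc k) u = q + gr b k v" unfolding u by (rule gr_dec[OF P_def vP])
  have uR: "q*P + v < b*P + 1" using Suc.prems u RP R_def by simp
  from H1[OF uR P1] have qb: "q \<le> b" "q = b \<Longrightarrow> v = 0" by auto
  show ?case
  proof (cases "i = Suc k")
    case True
    then have ri: "rb b i = P" using P_def by simp
    have e: "u + rb b i = (q+1)*P + v" using u ri by simp
    show ?thesis unfolding R_def[symmetric]
    proof (intro conjI impI)
      assume "u + rb b i < R"
      show "gr b (Suc k) (u + rb b i) \<le> gr b (Suc k) u + 1"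
        unfolding e gr_dec[OF P_def vP, of "q+1"] using gu by simp
    next
      assume a: "R \<le> u + rb b i"
      then have "b*P + 1 \<le> (q+1)*P + v" using e RP by simp
      from H2[OF vP this] have h: "b \<le> q + 1" "q + 1 = b \<Longrightarrow> v \<ge> 1" by auto
      show "gr b (Suc k) (u + rb b i - R) \<le> gr b (Suc k) u"
      proof (cases "q = b")
        case True
        then have v0: "v = 0" using qb by simp
        have "u + rb b i - R = P - 1" using e RP True v0 by (simp add: algebra_simps)
        moreover have "P - 1 < P" using P1 by simp
        ultimately have "gr b (Suc k) (u + rb b i - R) = gr b k (P - 1)" using gr_dec0[OF P_def] by simp
        moreover have "gr b k (P - 1) \<le> b" unfolding P_def using Suc.prems by (intro gr_E) auto
        ultimately show ?thesis using gu True by simp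
      next
        case False
        then have qb1: "q + 1 = b" using h qb by simp
        then have v1: "v \<ge> 1" using h by simp
        have bq: "b = q + 1" using qb1 by simp
        have "u + rb b i - R = v - 1" using e RP unfolding bq by simp
        moreover have "v - 1 < P" using vP by simp
        ultimately have "gr b (Suc k) (u + rb b i - R) = gr b k (v - 1)" using gr_dec0[OF P_def] by simp
        moreover have "gr b k (v - 1) + 1 \<le> gr b k v + b" using gr_D[of b v k] Suc.prems v1 vP P_def by simp
        ultimately show ?thesis using gu qb1 by simp
      qed
    qed
  next
    case False
    then have ik: "i \<le> k" using Suc.prems by simp
    have riP: "rb b i < P" unfolding P_def using Suc.prems ik by (intro rb_strict) auto
    note IH = Suc.IH[of i v, OF Suc.prems(1,2) ik, folded P_def, OF vP]
    show ?thesis unfolding R_def[symmetric]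
    proof (cases "v + rb b i < P")
      case True
      have e: "u + rb b i = q*P + (v + rb b i)" using u by simp
      show "(u + rb b i < R \<longrightarrow> gr b (Suc k) (u + rb b i) \<le> gr b (Suc k) u + 1) \<and>
        (R \<le> u + rb b i \<longrightarrow> gr b (Suc k) (u + rb b i - R) \<le> gr b (Suc k) u)"
      proof (intro conjI impI)
        show "gr b (Suc k) (u + rb b i) \<le> gr b (Suc k) u + 1"
          unfolding e gr_dec[OF P_def True, of q] using gu IH True by simp
      next
        assume a: "R \<le> u + rb b i"
        then have "b*P + 1 \<le> q*P + (v + rb b i)" using e RP by simp
        from H2[OF True this] have "b \<le> q" by simp
        then have qq: "q = b" and v0: "v = 0" using qb by auto
        have "u + rb b i - R = rb b i - 1" using e RP qq v0 by simp
        moreover have "rb b i - 1 < P" using riP by simp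
        ultimately have "gr b (Suc k) (u + rb b i - R) = gr b k (rb b i - 1)" using gr_dec0[OF P_def] by simp
        moreover have "gr b k (rb b i - 1) \<le> b" using Suc.prems ik by (intro gr_E) auto
        ultimately show "gr b (Suc k) (u + rb b i - R) \<le> gr b (Suc k) u" using gu qq by simp
      qed
    next
      case False
      define w where "w = v + rb b i - P"
      have wP: "w < P" unfolding w_def using vP riP by simp
      have gw: "gr b k w \<le> gr b k v" using IH False w_def by simp
      have qlt: "q < b" using qb riP False by (cases "q = b") auto
      have e: "u + rb b i = (q+1)*P + w" using u False w_def by simp
      show "(u + rb b i < R \<longrightarrow> gr b (Suc k) (u + rb b i) \<le> gr b (Suc k) u + 1) \<and>
        (R \<le> u + rb b i \<longrightarrow> gr b (Suc k) (u + rb b i - R) \<le> gr b (Suc k) u)"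
      proof (intro conjI impI)
        show "gr b (Suc k) (u + rb b i) \<le> gr b (Suc k) u + 1"
          unfolding e gr_dec[OF P_def wP, of "q+1"] using gu gw by simp
      next
        assume a: "R \<le> u + rb b i"
        then have "b*P + 1 \<le> (q+1)*P + w" using e RP by simp
        from H2[OF wP this] qlt have qq: "q + 1 = b" and w1: "w \<ge> 1" by auto
        have bq: "b = q + 1" using qq by simp
        have "u + rb b i - R = w - 1" using e RP unfolding bq by simp
        moreover have "w - 1 < P" using wP by simp
        ultimately have "gr b (Suc k) (u + rb b i - R) = gr b k (w - 1)" using gr_dec0[OF P_def] by simp
        moreover have "gr b k (w - 1) + 1 \<le> gr b k w + b" using gr_D[of b w k] Suc.prems w1 wP P_def by simp
        ultimately show "gr b (Suc k) (u + rb b i - R) \<le> gr b (Suc k) u" using gu qq gw by simp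
      qed
    qed
  qed
qed

lemma rb_big: "b \<ge> 1 \<Longrightarrow> rb b (n + j) = rb b j + rb b n * (1 + (b - 1) * rb b j)"
proof -
  assume "b \<ge> 1"
  have "rb b (n + j) = rb b n + b ^ n * rb b j" by (rule rb_add)
  also have "b ^ n = (b - 1) * rb b n + 1" using rb_pow[OF \<open>b \<ge> 1\<close>, of n] by simp
  finally show ?thesis by (simp add: algebra_simps)
qed

lemma gr_L: "b \<ge> 1 \<Longrightarrow> u < rb b (Suc K) \<Longrightarrow>
  gr b K ((u + rb b i) mod rb b (Suc K)) \<le> gr b K u + 1 + (u + rb b i) div rb b (Suc K)"
proof (induction i rule: less_induct)
  case (less i)
  define m where "m = rb b (Suc K)"
  have m1: "m \<ge> 1" unfolding m_def by (rule rb_pos)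
  have um: "u < m" using less m_def by simp
  consider "i = 0" | "1 \<le> i \<and> i \<le> K" | "i = Suc K" | "i > Suc K" by linarith
  then have "gr b K ((u + rb b i) mod m) \<le> gr b K u + 1 + (u + rb b i) div m"
  proof cases
    case 1 then show ?thesis using um m_def by simp
  next
    case 2
    have rim: "rb b i < m" unfolding m_def using 2 less by (intro rb_strict) auto
    note C = gr_C[of b i K u, folded m_def, OF less(2)] 2 um
    show ?thesis
    proof (cases "u + rb b i < m")
      case True then show ?thesis using C by simp
    next
      case False
      then have "(u + rb b i) mod m = u + rb b i - m" "(u + rb b i) div m = 1"
        using um rim m1 by (simp_all add: mod_if div_if)
      then show ?thesis using C False by simp
    qed
  next
    case 3 then show ?thesis using um m_def by simp
  next
    case 4
    define j where "j = i - Suc K"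
    have j: "i = Suc K + j" "j < i" using 4 unfolding j_def by simp_all
    define c where "c = 1 + (b - 1) * rb b j"
    have ri: "rb b i = rb b j + m * c" unfolding j(1) m_def c_def by (rule rb_big[OF less(2)])
    have e1: "(u + rb b i) mod m = (u + rb b j) mod m" unfolding ri
      by (simp only: add.assoc[symmetric] mod_mult_self2)
    have e2: "(u + rb b i) div m = (u + rb b j) div m + c" unfolding ri using m1
      by (simp only: add.assoc[symmetric]) (simp add: div_mult_self2)
    show ?thesis using less(1)[OF j(2) less(2,3)] e1 e2 m_def by simp
  qed
  then show ?case using m_def by simp
qed

inductive rep :: "nat \<Rightarrow> nat \<Rightarrow> nat \<Rightarrow> bool" for b where
  rep0: "rep b 0 0"
| repS: "rep b p y \<Longrightarrow> rep b (Suc p) (y + rb b i)"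

lemma rep_add: "rep b q y \<Longrightarrow> rep b p x \<Longrightarrow> rep b (p + q) (x + y)"
proof (induction rule: rep.induct)
  case rep0 then show ?case by simp
next
  case (repS q y i)
  then have "rep b (Suc (p + q)) ((x + y) + rb b i)" by (intro rep.repS) simp
  then show ?case by (simp add: add.assoc)
qed

lemma rep_mult: "rep b c (c * rb b j)"
proof (induction c)
  case 0 then show ?case by (simp add: rep0)
next
  case (Suc c) then show ?case using rep.repS[OF Suc, of j] by (simp add: add.commute)
qed

lemma rep_pad: "rep b p y \<Longrightarrow> rep b (p + e) y"
  using rep_add[OF rep_mult[of b e 0]] by simp

lemma rep_gr: "K \<ge> 1 \<Longrightarrow> rep b (gr b K u) u"
proof (induction K arbitrary: u)
  case 0 then show ?case by simp
next
  case (Suc K)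
  define P where "P = rb b (Suc K)"
  have P1: "P \<ge> 1" unfolding P_def by (rule rb_pos)
  have g: "gr b (Suc K) u = u div P + gr b K (u mod P)" unfolding P_def by (simp add: gr.simps(2))
  show ?case
  proof (cases "K = 0")
    case True
    then have "P = 1" unfolding P_def by (simp add: rb_def)
    then have "gr b (Suc K) u = u" using g True by simp
    moreover have "rep b u (u * rb b 1)" by (rule rep_mult)
    ultimately show ?thesis by (simp add: rb_def)
  next
    case False
    then have "rep b (gr b K (u mod P)) (u mod P)" using Suc.IH by simp
    from rep_add[OF this rep_mult[of b "u div P" "Suc K"]]
    have "rep b (u div P + gr b K (u mod P)) (u div P * P + u mod P)" using P_def by simp
    moreover have "u div P * P + u mod P = u" by (rule div_mult_mod_eq)
    ultimately show ?thesis using g by simp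
  qed
qed

lemma rep_lower: "rep b p y \<Longrightarrow> b \<ge> 1 \<Longrightarrow>
   gr b K (y mod rb b (Suc K)) \<le> p + y div rb b (Suc K)"
proof (induction rule: rep.induct)
  case rep0 then show ?case by simp
next
  case (repS p y i)
  define m where "m = rb b (Suc K)"
  have m1: "m \<ge> 1" unfolding m_def by (rule rb_pos)
  define u where "u = y mod m"
  have um: "u < m" unfolding u_def using m1 by simp
  have ye: "y + rb b i = (u + rb b i) + m * (y div m)" unfolding u_def by simp
  have e1: "(y + rb b i) mod m = (u + rb b i) mod m" unfolding ye by (rule mod_mult_self2)
  have e2: "(y + rb b i) div m = (u + rb b i) div m + y div m" unfolding ye using m1 by simp
  have L: "gr b K ((u + rb b i) mod m) \<le> gr b K u + 1 + (u + rb b i) div m"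
    using gr_L[of b u K i] repS um m_def by simp
  have IH: "gr b K u \<le> p + y div m" using repS u_def m_def by simp
  show ?case using L IH e1 e2 m_def by simp
qed

lemma S_char1: "t \<in> S_a a b n \<Longrightarrow> \<exists>p y. rep b p y \<and> t = p * rb b n + a * y"
  unfolding S_a_def
proof (induction rule: gen_monoid.induct)
  case zero then show ?case using rep0 by auto
next
  case (gen x)
  then obtain i where x: "x = rb b n + a * rb b (i - 1)" by (auto simp: gen_a_def)
  have "rep b 1 (0 + rb b (i - 1))" using rep.repS[OF rep0] by simp
  then show ?case using x by fastforce
next
  case (add x y)
  then obtain p1 y1 p2 y2 where "rep b p1 y1" "x = p1 * rb b n + a * y1" "rep b p2 y2" "y = p2 * rb b n + a * y2"
    by blast
  then show ?case using rep_add[of b p2 y2 p1 y1] by (intro exI[of _ "p1+p2"] exI[of _ "y1+y2"]) (simp add: algebra_simps)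
qed

lemma S_char2: "rep b p y \<Longrightarrow> p * rb b n + a * y \<in> S_a a b n"
proof (induction rule: rep.induct)
  case rep0 then show ?case unfolding S_a_def by (simp add: gen_monoid.zero)
next
  case (repS p y i)
  have "gen_a a b n (Suc i) \<in> S_a a b n" unfolding S_a_def by (rule gen_monoid.gen) auto
  from gen_monoid.add[OF repS.IH[unfolded S_a_def] this[unfolded S_a_def]]
  show ?case unfolding S_a_def gen_a_def by (simp add: algebra_simps)
qed

lemma sum_split: "(\<Sum>u<c*P. f u) = (\<Sum>q<c. \<Sum>v<P. f (q*P + v)) " for f :: "nat \<Rightarrow> nat"
proof -
  have "(\<Sum>u<c*P. f u) = (\<Sum>q<c. sum f {q*P..<q*P+P})" by (rule sum.nat_group[symmetric])
  also have "\<dots> = (\<Sum>q<c. \<Sum>v<P. f (q*P + v))"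
  proof (rule sum.cong[OF refl])
    fix q
    have "sum f {0 + q*P..<P + q*P} = (\<Sum>v=0..<P. f (v + q*P))" by (rule sum.shift_bounds_nat_ivl)
    then show "sum f {q*P..<q*P+P} = (\<Sum>v<P. f (q*P + v))" by (simp add: atLeast0LessThan add.commute)
  qed
  finally show ?thesis .
qed

lemma gauss2: "2 * (\<Sum>q<b. q) + b = b * (b::nat)"
  by (induction b) (simp_all add: algebra_simps)

lemma gr_sum: "2 * (\<Sum>u<rb b (Suc k). gr b k u) + 1 = k * b ^ (Suc k) + rb b (Suc k)"
proof (induction k)
  case 0 then show ?case by (simp add: rb_def)
next
  case (Suc k)
  define P where "P = rb b (Suc k)"
  define G where "G = (\<Sum>u<P. gr b k u)"
  define Sq where "Sq = (\<Sum>q<b. q)"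
  have P1: "P \<ge> 1" unfolding P_def by (rule rb_pos)
  have R: "rb b (Suc (Suc k)) = b * P + 1" unfolding P_def by (rule rb_Suc')
  have W: "P + b ^ Suc k = b * P + 1" using R unfolding P_def by (simp add: rb_Suc)
  have IH: "2 * G + 1 = k * b ^ Suc k + P" using Suc unfolding G_def P_def by simp
  have X: "2 * Sq + b = b * b" unfolding Sq_def by (rule gauss2)
  have "(\<Sum>u<rb b (Suc (Suc k)). gr b (Suc k) u) = (\<Sum>u<b*P. gr b (Suc k) u) + gr b (Suc k) (b*P)"
    unfolding R by simp
  also have "(\<Sum>u<b*P. gr b (Suc k) u) = (\<Sum>q<b. \<Sum>v<P. gr b (Suc k) (q*P + v))" by (rule sum_split)
  also have "\<dots> = (\<Sum>q<b. \<Sum>v<P. q + gr b k v)"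
    by (intro sum.cong refl) (simp add: gr_dec[OF P_def])
  also have "\<dots> = P * Sq + b * G" unfolding Sq_def G_def
    by (simp add: sum.distrib sum_distrib_left mult.commute)
  also have "gr b (Suc k) (b*P) = b"
  proof -
    have "gr b (Suc k) (b*P + 0) = b + gr b k 0" by (rule gr_dec[OF P_def]) (use P1 in simp)
    then show ?thesis by simp
  qed
  finally have S: "(\<Sum>u<rb b (Suc (Suc k)). gr b (Suc k) u) = P * Sq + b * G + b" .
  have "2 * (P * Sq + b * G + b) + 1 + P * b + b = P * (2 * Sq + b) + b * (2 * G + 1) + 2 * b + 1"
    by (simp add: algebra_simps)
  also have "\<dots> = P * (b * b) + b * (k * b ^ Suc k + P) + 2 * b + 1" using X IH by simp
  finally have A1: "2 * (P * Sq + b * G + b) + 1 + P * b + b = P * (b * b) + b * (k * b ^ Suc k + P) + 2 * b + 1" .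
  have W2: "b * P + b * b ^ Suc k = b * b * P + b" using arg_cong[OF W, of "\<lambda>x. b * x"] by (simp add: algebra_simps)
  have "2 * (P * Sq + b * G + b) + 1 = Suc k * b ^ Suc (Suc k) + (b * P + 1)"
    using A1 W2 by (simp add: algebra_simps)
  then show ?case using S R by simp
qed

lemma key_pair: "coprime a m \<Longrightarrow> 0 < u \<Longrightarrow> u < m \<Longrightarrow> a*u div m + a*(m-u) div m + 1 = (a::nat)"
proof -
  assume cop: "coprime a m" and u: "0 < u" "u < m"
  define x where "x = a*u"
  define y where "y = a*(m-u)"
  have xy: "x + y = a*m" unfolding x_def y_def using u by (simp add: algebra_simps)
  have xm: "x mod m \<noteq> 0"
  proof
    assume "x mod m = 0"
    then have "m dvd a*u" unfolding x_def by auto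
    then have "m dvd u" using cop by (metis coprime_commute coprime_dvd_mult_right_iff)
    then show False using u by (auto dest: dvd_imp_le)
  qed
  define z where "z = x mod m + y mod m"
  have z0: "z mod m = 0" unfolding z_def using xy by (simp add: mod_add_eq)
  have "x mod m < m" "y mod m < m" using u by simp_all
  then have z2: "z < 2 * m" unfolding z_def by linarith
  have zp: "z > 0" using xm unfolding z_def by simp
  have s: "x mod m + y mod m = m"
  proof (cases "z < m")
    case True then show ?thesis using z0 zp by simp
  next
    case False
    then have "z mod m = z - m" using z2 by (simp add: mod_if)
    then show ?thesis using z0 False unfolding z_def by simp
  qed
  have "m * (x div m) + m * (y div m) + m = a * m"
    using xy s mult_div_mod_eq[of m x] mult_div_mod_eq[of m y] by linarith
  then have "m * (x div m + y div m + 1) = a * m" by (simp add: algebra_simps)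
  then have "m * (x div m + y div m + 1) = m * a" using s by (simp add: algebra_simps)
  moreover have m0: "m \<noteq> 0" using u by simp
  ultimately have "x div m + y div m + 1 = a" using mult_left_cancel[OF m0] by blast
  then show ?thesis unfolding x_def y_def .
qed

lemma floor_sum: "coprime a m \<Longrightarrow> m \<ge> 1 \<Longrightarrow> 2 * (\<Sum>u<m. a*u div m) + a + m = a*m + (1::nat)"
proof -
  assume cop: "coprime a m" and m1: "m \<ge> 1"
  define f where "f u = a*u div m" for u
  have e0: "(\<Sum>u<m. f u) = (\<Sum>u\<in>{1..<m}. f u)"
  proof -
    have "{..<m} = insert 0 {1..<m}" using m1 by auto
    then show ?thesis by (simp add: f_def)
  qed
  have rev: "(\<Sum>u\<in>{1..<m}. f u) = (\<Sum>u\<in>{1..<m}. f (m - u))"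
    using sum.atLeastLessThan_rev[of f 1 m] by simp
  have dd: "(\<Sum>u\<in>{1..<m}. f u + f (m - u) + 1) = (\<Sum>u\<in>{1..<m}. f u) + (\<Sum>u\<in>{1..<m}. f (m - u)) + (\<Sum>u\<in>{1..<m}. 1)"
    by (simp only: sum.distrib)
  have "2 * (\<Sum>u\<in>{1..<m}. f u) + (m - 1) = (\<Sum>u\<in>{1..<m}. f u + f (m - u) + 1)"
    unfolding dd rev[symmetric] by simp
  also have "\<dots> = (\<Sum>u\<in>{1..<m}. a)"
    by (rule sum.cong[OF refl]) (use key_pair[OF cop] in \<open>auto simp: f_def\<close>)
  also have "\<dots> = (m - 1) * a" by simp
  finally have "2 * (\<Sum>u\<in>{1..<m}. f u) + (m - 1) = (m - 1) * a" .
  then show ?thesis using e0 m1 unfolding f_def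
    by (cases m) (simp_all add: algebra_simps)
qed

lemma rb_sum1: "rb b (Suc K) = 1 + (\<Sum>j=1..K. b ^ j)"
  by (induction K) (simp_all add: rb_Suc)

lemma cancel_mod: "coprime a m \<Longrightarrow> u1 < m \<Longrightarrow> u2 < m \<Longrightarrow> (a*u1) mod m = (a*u2) mod m \<Longrightarrow> u1 = (u2::nat)"
proof -
  assume cop: "coprime a m" and u: "u1 < m" "u2 < m" and e: "(a*u1) mod m = (a*u2) mod m"
  have "m dvd a * (max u1 u2 - min u1 u2)"
  proof (cases "u1 \<le> u2")
    case True
    then have "m dvd a*u2 - a*u1" using e mod_eq_dvd_iff_nat[of "a*u1" "a*u2" m] by simp
    then show ?thesis using True by (simp add: diff_mult_distrib2)
  next
    case False
    then have "m dvd a*u1 - a*u2" using e mod_eq_dvd_iff_nat[of "a*u2" "a*u1" m] by simp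
    then show ?thesis using False by (simp add: diff_mult_distrib2)
  qed
  then have "m dvd (max u1 u2 - min u1 u2)" using cop
    by (metis coprime_commute coprime_dvd_mult_right_iff)
  moreover have "max u1 u2 - min u1 u2 < m" using u by simp
  ultimately have "max u1 u2 - min u1 u2 = 0" by (metis dvd_imp_le not_le neq0_conv)
  then show ?thesis by simp
qed

theorem corollary26:
  fixes a b n :: nat
  assumes "a > 0" and "b > 1" and "n > 1" and "coprime (rb b n) a"
  shows "finite (UNIV - S_a a b n)
    \<and> 2 * genus (S_a a b n) = (n - 1) * b ^ n + (rb b n - 1) * a
    \<and> (n - 1) * b ^ n + (rb b n - 1) * a = (n - 1) * b ^ n + a * (\<Sum>j=1..n-1. b ^ j)"
proof -
  define m where "m = rb b n"
  define K where "K = n - 1"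
  have nK: "n = Suc K" using assms K_def by simp
  have b1: "b \<ge> 1" using assms by simp
  have mK: "m = rb b (Suc K)" using m_def nK by simp
  have m1: "m \<ge> 1" unfolding mK by (rule rb_pos)
  have K1: "K \<ge> 1" using assms K_def by simp
  have cop: "coprime a m" using assms(4) m_def by (simp add: coprime_commute)
  define g where "g u = gr b K u" for u
  define w where "w u = a*u + g u * m" for u
  define D where "D = Sigma {..<m} (\<lambda>u. {1..w u div m})"
  define F where "F = (\<lambda>(u,j). w u - j*m)"
  have modw: "(w u) mod m = (a*u) mod m" for u unfolding w_def by (rule mod_mult_self1)
  have divw: "(w u) div m = g u + a*u div m" for u unfolding w_def using m1 by simp
  have surj: "\<exists>u<m. (a*u) mod m = t mod m" for t
  proof -
    define h where "h u = (a*u) mod m" for u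
    have "h ` {..<m} \<subseteq> {..<m}" unfolding h_def using m1 by auto
    moreover have "inj_on h {..<m}" unfolding h_def using cancel_mod[OF cop] by (auto intro: inj_onI)
    ultimately have "h ` {..<m} = {..<m}" by (intro endo_inj_surj) auto
    moreover have "t mod m \<in> {..<m}" using m1 by simp
    ultimately have "t mod m \<in> h ` {..<m}" by simp
    then obtain u where "u \<in> {..<m}" "t mod m = h u" by blast
    then show ?thesis unfolding h_def by auto
  qed
  have gaps: "UNIV - S_a a b n = F ` D"
  proof (rule equalityI; rule subsetI)
    fix t assume "t \<in> UNIV - S_a a b n"
    then have tS: "t \<notin> S_a a b n" by simp
    obtain u where u: "u < m" "(a*u) mod m = t mod m" using surj by blast
    have tw: "t < w u"
    proof (rule ccontr)
      assume "\<not> t < w u"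
      then have le: "w u \<le> t" by simp
      have "t mod m = (w u) mod m" using modw u by simp
      then have "m dvd t - w u" using mod_eq_dvd_iff_nat[OF le, of m] by simp
      then obtain e where e: "t - w u = m * e" by blast
      have teq: "t = (g u + e) * m + a * u" using e le unfolding w_def by (simp add: algebra_simps)
      have "rep b (gr b K u + e) u" by (rule rep_pad[OF rep_gr[OF K1]])
      from S_char2[OF this, of n a] have "t \<in> S_a a b n" unfolding teq g_def m_def by simp
      then show False using tS by simp
    qed
    have "(w u) mod m = t mod m" using modw u by simp
    then have "m dvd w u - t" using mod_eq_dvd_iff_nat[of t "w u" m] tw by simp
    then obtain j where j: "w u - t = m * j" by blast
    have j1: "j \<ge> 1" using j tw by (cases j) auto
    have teq: "t = w u - j * m" using j tw by (simp add: algebra_simps)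
    have "j * m \<le> w u" using j tw by (simp add: algebra_simps)
    then have "j \<le> w u div m" using m1 by (simp add: less_eq_div_iff_mult_less_eq)
    then have "(u, j) \<in> D" unfolding D_def using u j1 by simp
    then show "t \<in> F ` D" unfolding F_def teq by force
  next
    fix t assume "t \<in> F ` D"
    then obtain u j where uj: "(u,j) \<in> D" and t: "t = w u - j*m" unfolding F_def by auto
    have u: "u < m" and j1: "j \<ge> 1" and jw: "j \<le> w u div m" using uj unfolding D_def by auto
    have jm: "j * m \<le> w u" using jw m1 by (simp add: less_eq_div_iff_mult_less_eq)
    have tjw: "t + j * m = w u" using t jm by simp
    have "j * m > 0" using j1 m1 by simp
    then have tlt: "t < w u" using tjw by linarith
    have "t \<notin> S_a a b n"
    proof
      assume "t \<in> S_a a b n"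
      from S_char1[OF this] obtain p y where py: "rep b p y" "t = p * rb b n + a * y" by blast
      define u' where "u' = y mod m"
      have lowr: "g u' \<le> p + y div m" unfolding g_def u'_def mK using rep_lower[OF py(1) b1] .
      have "t mod m = (t + j*m) mod m" by simp
      then have "t mod m = (a*u) mod m" using tjw modw[of u] by simp
      moreover have "t mod m = (a*u') mod m"
      proof -
        have t': "t = a*y + p*m" using py(2) m_def by simp
        have "t mod m = (a*y) mod m" unfolding t' by (rule mod_mult_self1)
        also have "\<dots> = (a*u') mod m" unfolding u'_def by (rule mod_mult_right_eq[symmetric])
        finally show ?thesis .
      qed
      moreover have "u' < m" unfolding u'_def using m1 by simp
      ultimately have uu: "u' = u" using cancel_mod[OF cop, of u' u] u by simp
      have ye: "y = u + m * (y div m)" using uu mod_mult_div_eq[of y m] unfolding u'_def by simp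
      have "a * y = a * (u + m * (y div m))" using ye by (rule arg_cong)
      then have "t = p * m + a * u + a * (m * (y div m))" using py(2) m_def by (simp add: algebra_simps)
      moreover have "m * (y div m) \<le> a * (m * (y div m))" using assms(1) by simp
      ultimately have "t \<ge> a * u + (p + y div m) * m" by (simp add: algebra_simps)
      moreover have "(p + y div m) * m \<ge> g u * m" using lowr uu by (intro mult_le_mono1) simp
      ultimately have "t \<ge> w u" unfolding w_def by linarith
      then show False using tlt by simp
    qed
    then show "t \<in> UNIV - S_a a b n" by simp
  qed
  have finD: "finite D" unfolding D_def by simp
  have inj: "inj_on F D"
  proof (rule inj_onI)
    fix x y assume x: "x \<in> D" and y: "y \<in> D" and e: "F x = F y"
    obtain u1 j1 where x': "x = (u1, j1)" by (cases x)
    obtain u2 j2 where y': "y = (u2, j2)" by (cases y)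
    have A: "u1 < m" "j1 * m \<le> w u1" using x x' m1 unfolding D_def by (auto simp: less_eq_div_iff_mult_less_eq)
    have B: "u2 < m" "j2 * m \<le> w u2" using y y' m1 unfolding D_def by (auto simp: less_eq_div_iff_mult_less_eq)
    define t where "t = w u1 - j1 * m"
    have t2: "t = w u2 - j2 * m" using e x' y' unfolding t_def F_def by simp
    have t1e: "t + j1*m = w u1" unfolding t_def using A by simp
    have t2e: "t + j2*m = w u2" unfolding t2 using B by simp
    have m1e: "t mod m = (t + j1*m) mod m" "t mod m = (t + j2*m) mod m" by simp_all
    have "t mod m = (a*u1) mod m" using m1e(1) t1e modw[of u1] by simp
    moreover have "t mod m = (a*u2) mod m" using m1e(2) t2e modw[of u2] by simp
    ultimately have uu: "u1 = u2" by (intro cancel_mod[OF cop A(1) B(1)]) simp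
    then have "t + j1 * m = t + j2 * m" using t1e t2e by simp
    then have "j1 = j2" using m1 by simp
    then show "x = y" using x' y' uu by simp
  qed
  have gen: "genus (S_a a b n) = (\<Sum>u<m. g u) + (\<Sum>u<m. a*u div m)"
  proof -
    have "genus (S_a a b n) = card (F ` D)" unfolding genus_def gaps ..
    also have "\<dots> = card D" using inj by (rule card_image)
    also have "\<dots> = (\<Sum>u<m. w u div m)" unfolding D_def by (simp add: card_SigmaI)
    also have "\<dots> = (\<Sum>u<m. g u) + (\<Sum>u<m. a*u div m)" unfolding divw by (simp add: sum.distrib)
    finally show ?thesis .
  qed
  have G: "2 * (\<Sum>u<m. g u) + 1 = K * b ^ n + m" unfolding g_def mK nK by (rule gr_sum)
  have Fl: "2 * (\<Sum>u<m. a*u div m) + a + m = a*m + 1" using floor_sum[OF cop m1] .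
  have am: "a * m \<ge> a" using m1 by simp
  have c2: "2 * genus (S_a a b n) = (n - 1) * b ^ n + (rb b n - 1) * a"
  proof -
    have "2 * genus (S_a a b n) + a = K * b ^ n + a * m" using gen G Fl by simp
    then show ?thesis unfolding K_def m_def[symmetric] using am by (simp add: diff_mult_distrib algebra_simps)
  qed
  have c3: "(rb b n - 1) * a = a * (\<Sum>j=1..n-1. b ^ j)" unfolding nK rb_sum1 by simp
  show ?thesis using gaps finD c2 c3 by simp
qed

end
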